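(* Let $b>3$ and let $f:B(b)\to\mathbb{C}$ be a conformal embedding (injective holomorphic map) with $f(0)=0$ and $f(z+1)=f(z)+1$ for all $z\in B(b)$. Then for every $z=x+iy\in B(b-3)$, $$|f''(z)|\le C_2\,e^{2\pi(|y|-b)},$$ where $C_1=\sqrt{8/\pi}$ and $C_2=8\pi e^{5\pi}(C_1+1)$.
   Context: $B(b)=\{z\in\mathbb{C}:|\operatorname{Im}z|<b\}$. *)

theory Defs
  imports "HOL-Complex_Analysis.Complex_Analysis"
begin

definition strip :: "real \<Rightarrow> complex set" where
  "strip b = {z. \<bar>Im z\<bar> < b}"

definition C1 :: real where "C1 = sqrt (8 / pi)"
definition C2 :: real where "C2 = 8 * pi * exp (5 * pi) * (C1 + 1)"

end

theory Submission
  imports Defs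
begin


lemma annulus_deriv_bound:
  fixes P :: "complex \<Rightarrow> complex"
  assumes holP: "P holomorphic_on A" and oA: "open A"
    and r0: "0 < r" and rw: "r < cmod w" and wR: "cmod w < R"
    and sub: "\<And>\<zeta>. r \<le> cmod \<zeta> \<Longrightarrow> cmod \<zeta> \<le> R \<Longrightarrow> \<zeta> \<in> A"
    and bd: "\<And>\<zeta>. cmod \<zeta> = r \<or> cmod \<zeta> = R \<Longrightarrow> cmod (P \<zeta>) \<le> M"
  shows "cmod (deriv P w) \<le> M * (R / (R - cmod w)^2 + r / (cmod w - r)^2)"
proof -
  have wA: "w \<in> A" using sub rw wR by auto
  have R0: "0 < R" using r0 rw wR by linarith
  define \<phi>1 where "\<phi>1 = (\<lambda>z. if z = w then deriv P w else (P z - P w) / (z - w))"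
  have h1: "\<phi>1 holomorphic_on A" unfolding \<phi>1_def using pole_lemma_open[OF holP oA] .
  define \<phi>2 where "\<phi>2 = (\<lambda>z. if z = w then deriv \<phi>1 w else (\<phi>1 z - \<phi>1 w) / (z - w))"
  have h2: "\<phi>2 holomorphic_on A" unfolding \<phi>2_def using pole_lemma_open[OF h1 oA] .
  have M0: "0 \<le> M" using bd[of "of_real r"] r0 by (smt (verit) norm_ge_zero norm_of_real)
  have eq2: "\<phi>2 z = P z / (z - w)^2 - P w / (z - w)^2 - deriv P w / (z - w)" if "z \<noteq> w" for z
  proof -
    have nz: "z - w \<noteq> 0" using that by simp
    have "\<phi>2 z = ((P z - P w) / (z - w) - deriv P w) / (z - w)"
      using that by (simp add: \<phi>2_def \<phi>1_def)
    also have "\<dots> = P z / (z - w)^2 - P w / (z - w)^2 - deriv P w / (z - w)"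
      using nz diff_divide_distrib power2_eq_square
      by (metis (no_types, lifting) divide_divide_eq_left)
    finally show ?thesis .
  qed
  have hom: "homotopic_loops A (circlepath 0 R) (circlepath 0 r)"
  proof (rule homotopic_loops_linear)
    fix t x assume t: "t \<in> {0..1::real}"
    show "closed_segment (circlepath 0 R t) (circlepath 0 r t) \<subseteq> A"
    proof
      fix y assume "y \<in> closed_segment (circlepath 0 R t) (circlepath 0 r t)"
      then obtain u where u: "0 \<le> u" "u \<le> 1"
        and y: "y = (1 - u) *\<^sub>R circlepath 0 R t + u *\<^sub>R circlepath 0 r t"
        unfolding closed_segment_def by auto
      have "y = of_real ((1 - u) * R + u * r) * exp (2 * of_real pi * \<i> * of_real t)"
        by (simp add: y circlepath scaleR_conv_of_real algebra_simps)
      then have "cmod y = \<bar>(1 - u) * R + u * r\<bar>"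
        by (simp only: norm_mult norm_of_real norm_exp_eq_Re) simp
      moreover have "0 \<le> (1 - u) * R + u * r" using u r0 R0 by simp
      ultimately have "cmod y = (1 - u) * R + u * r" by simp
      moreover have "r \<le> (1 - u) * R + u * r" "(1 - u) * R + u * r \<le> R"
      proof -
        have a: "0 \<le> (1 - u) * (R - r)" "0 \<le> u * (R - r)" using u rw wR by simp_all
        show "r \<le> (1 - u) * R + u * r" using a(1) by (simp add: algebra_simps)
        show "(1 - u) * R + u * r \<le> R" using a(2) by (simp add: algebra_simps)
      qed
      ultimately show "y \<in> A" using sub by auto
    qed
  qed auto
  have vR: "valid_path (circlepath 0 R)" and vr: "valid_path (circlepath 0 r)" by auto
  have eqint: "contour_integral (circlepath 0 R) \<phi>2 = contour_integral (circlepath 0 r) \<phi>2"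
    by (rule Cauchy_theorem_homotopic_loops[OF hom oA h2 vR vr])
  have piR: "path_image (circlepath 0 R) \<subseteq> A - {w}"
    using R0 rw wR sub by (force simp: path_image_circlepath sphere_def dist_norm)
  have pir: "path_image (circlepath 0 r) \<subseteq> A - {w}"
    using r0 rw wR sub by (force simp: path_image_circlepath sphere_def dist_norm)
  have hQ: "(\<lambda>z. P z / (z - w)^2) holomorphic_on A - {w}"
    by (intro holomorphic_intros holomorphic_on_subset[OF holP]) auto
  have oAw: "open (A - {w})" using oA by auto
  define IR where "IR = contour_integral (circlepath 0 R) (\<lambda>z. P z / (z - w)^2)"
  define Ir where "Ir = contour_integral (circlepath 0 r) (\<lambda>z. P z / (z - w)^2)"
  have iR: "((\<lambda>z. P z / (z - w)^2) has_contour_integral IR) (circlepath 0 R)"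
    unfolding IR_def by (rule has_contour_integral_integral, rule contour_integrable_holomorphic_simple[OF hQ oAw vR piR])
  have ir: "((\<lambda>z. P z / (z - w)^2) has_contour_integral Ir) (circlepath 0 r)"
    unfolding Ir_def by (rule has_contour_integral_integral, rule contour_integrable_holomorphic_simple[OF hQ oAw vr pir])
  have wb: "w \<in> ball 0 R" using wR by auto
  have c1: "((\<lambda>z. P w / (z - w)^(Suc 1)) has_contour_integral ((2 * pi * \<i>) / (fact 1) * (deriv ^^ 1) (\<lambda>_. P w) w)) (circlepath 0 R)"
    by (rule Cauchy_has_contour_integral_higher_derivative_circlepath) (use wb in auto)
  have c1': "((\<lambda>z. P w / (z - w)^2) has_contour_integral 0) (circlepath 0 R)"
    using c1 by (simp add: numeral_2_eq_2)
  have c2: "((\<lambda>z. deriv P w / (z - w)) has_contour_integral (2 * of_real pi * \<i> * deriv P w)) (circlepath 0 R)"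
    by (rule Cauchy_integral_circlepath_simple) (use wR in auto)
  have "((\<lambda>z. P z / (z - w)^2 - P w / (z - w)^2 - deriv P w / (z - w)) has_contour_integral
           (IR - 0 - 2 * of_real pi * \<i> * deriv P w)) (circlepath 0 R)"
    by (intro has_contour_integral_diff iR c1' c2)
  then have "((\<lambda>z. P z / (z - w)^2 - P w / (z - w)^2 - deriv P w / (z - w)) has_contour_integral
           (IR - 2 * of_real pi * \<i> * deriv P w)) (circlepath 0 R)" by simp
  then have "(\<phi>2 has_contour_integral (IR - 2 * of_real pi * \<i> * deriv P w)) (circlepath 0 R)"
    by (rule has_contour_integral_eq) (use piR eq2 in force)
  then have e1: "contour_integral (circlepath 0 R) \<phi>2 = IR - 2 * of_real pi * \<i> * deriv P w"
    by (rule contour_integral_unique)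
  have hb: "(\<lambda>z. P w / (z - w)^2) holomorphic_on ball 0 (cmod w)"
    "(\<lambda>z. deriv P w / (z - w)) holomorphic_on ball 0 (cmod w)"
    by (intro holomorphic_intros; auto)+
  have pib: "path_image (circlepath 0 r) \<subseteq> ball 0 (cmod w)"
    using r0 rw by (auto simp: path_image_circlepath sphere_def dist_norm)
  have d1: "((\<lambda>z. P w / (z - w)^2) has_contour_integral 0) (circlepath 0 r)"
    by (rule Cauchy_theorem_convex_simple[OF hb(1) convex_ball vr pib]) simp
  have d2: "((\<lambda>z. deriv P w / (z - w)) has_contour_integral 0) (circlepath 0 r)"
    by (rule Cauchy_theorem_convex_simple[OF hb(2) convex_ball vr pib]) simp
  have "((\<lambda>z. P z / (z - w)^2 - P w / (z - w)^2 - deriv P w / (z - w)) has_contour_integral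
           (Ir - 0 - 0)) (circlepath 0 r)"
    by (intro has_contour_integral_diff ir d1 d2)
  then have "((\<lambda>z. P z / (z - w)^2 - P w / (z - w)^2 - deriv P w / (z - w)) has_contour_integral
           Ir) (circlepath 0 r)" by simp
  then have "(\<phi>2 has_contour_integral Ir) (circlepath 0 r)"
    by (rule has_contour_integral_eq) (use pir eq2 in force)
  then have e2: "contour_integral (circlepath 0 r) \<phi>2 = Ir"
    by (rule contour_integral_unique)
  have key: "2 * of_real pi * \<i> * deriv P w = IR - Ir" using eqint e1 e2 by (simp add: algebra_simps)
  have bR: "cmod IR \<le> (M / (R - cmod w)^2) * (2 * pi * R)"
  proof (rule has_contour_integral_bound_circlepath[OF iR])
    show "0 \<le> M / (R - cmod w)^2" using M0 by simp
    fix x :: complex assume "cmod (x - 0) = R"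
    then have x: "cmod x = R" by simp
    have "R - cmod w \<le> cmod (x - w)" using x norm_triangle_ineq2[of x w] by simp
    then have "(R - cmod w)^2 \<le> (cmod (x - w))^2" using wR by (intro power_mono) auto
    moreover have "cmod (P x) \<le> M" using bd x by auto
    ultimately show "cmod (P x / (x - w)^2) \<le> M / (R - cmod w)^2"
      using wR M0 by (simp add: norm_divide norm_power frac_le)
  qed (use R0 in auto)
  have br: "cmod Ir \<le> (M / (cmod w - r)^2) * (2 * pi * r)"
  proof (rule has_contour_integral_bound_circlepath[OF ir])
    show "0 \<le> M / (cmod w - r)^2" using M0 by simp
    fix x :: complex assume "cmod (x - 0) = r"
    then have x: "cmod x = r" by simp
    have "cmod w - r \<le> cmod (x - w)" using x norm_triangle_ineq2[of w x] by (simp add: norm_minus_commute)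
    then have "(cmod w - r)^2 \<le> (cmod (x - w))^2" using rw by (intro power_mono) auto
    moreover have "cmod (P x) \<le> M" using bd x by auto
    ultimately show "cmod (P x / (x - w)^2) \<le> M / (cmod w - r)^2"
      using rw M0 by (simp add: norm_divide norm_power frac_le)
  qed (use r0 in auto)
  have "2 * pi * cmod (deriv P w) = cmod (IR - Ir)"
    using arg_cong[OF key, of cmod] by (simp add: norm_mult)
  also have "\<dots> \<le> cmod IR + cmod Ir" by (rule norm_triangle_ineq4)
  also have "\<dots> \<le> 2 * pi * (M * (R / (R - cmod w)^2 + r / (cmod w - r)^2))"
    using bR br by (simp add: field_simps)
  finally show ?thesis by simp
qed




lemma strip_open: "open (strip b)"
  unfolding strip_def by (intro open_Collect_less continuous_intros)

lemma deriv_periodic: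
  fixes f :: "complex \<Rightarrow> complex"
  assumes hol: "f holomorphic_on strip b"
    and per: "\<And>z. z \<in> strip b \<Longrightarrow> f (z + 1) = f z + 1"
    and z: "z \<in> strip b"
  shows "deriv f (z + 1) = deriv f z"
proof -
  have z1: "z + 1 \<in> strip b" using z by (simp add: strip_def)
  have "f field_differentiable at (z + 1)"
    using hol z1 strip_open holomorphic_on_imp_differentiable_at by blast
  then have d: "(f has_field_derivative deriv f (z + 1)) (at (z + 1))"
    by (simp add: DERIV_deriv_iff_field_differentiable)
  then have "((\<lambda>x. f (x + 1)) has_field_derivative deriv f (z + 1)) (at z)"
    by (simp add: DERIV_shift)
  then have "((\<lambda>x. f x + 1) has_field_derivative deriv f (z + 1)) (at z)"
    by (rule has_field_derivative_transform_within_open[OF _ strip_open z]) (simp add: per)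
  then have "(f has_field_derivative deriv f (z + 1)) (at z)"
    using DERIV_add[OF _ DERIV_const[of "-1" "at z"]] by fastforce
  then show ?thesis by (rule DERIV_imp_deriv[symmetric])
qed

lemma bloch_bound:
  fixes f :: "complex \<Rightarrow> complex"
  assumes hol: "f holomorphic_on strip b"
    and inj: "inj_on f (strip b)"
    and per: "\<And>z. z \<in> strip b \<Longrightarrow> f (z + 1) = f z + 1"
    and z: "\<bar>Im z\<bar> \<le> b - 1/2"
  shows "cmod (deriv f z) \<le> 12"
proof (rule ccontr)
  assume "\<not> cmod (deriv f z) \<le> 12"
  then have big: "12 < cmod (deriv f z)" by simp
  have sub: "ball z (1/2) \<subseteq> strip b"
  proof
    fix x assume "x \<in> ball z (1/2)"
    then have "cmod (z - x) < 1/2" by (simp add: dist_norm)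
    then have "\<bar>Im (z - x)\<bar> < 1/2" using abs_Im_le_cmod[of "z - x"] by linarith
    then have "\<bar>Im z - Im x\<bar> < 1/2" by simp
    then show "x \<in> strip b" using z unfolding strip_def mem_Collect_eq by (smt (verit))
  qed
  have h: "f holomorphic_on ball z (1/2)" using hol sub holomorphic_on_subset by blast
  define r' where "r' = (1/2) * cmod (deriv f z) / 12"
  have r'big: "1/2 < r'" using big by (simp add: r'_def)
  obtain c where c: "ball c r' \<subseteq> f ` ball z (1/2)"
    using Bloch[OF h _ order_refl[of r', unfolded r'_def]] r'_def by auto
  have "c + 1/2 \<in> ball c r'" "c - 1/2 \<in> ball c r'" using r'big by (auto simp: dist_norm)
  then obtain p q where p: "p \<in> ball z (1/2)" "f p = c + 1/2"
    and q: "q \<in> ball z (1/2)" "f q = c - 1/2"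
  proof -
    from \<open>c + 1/2 \<in> ball c r'\<close> c obtain p where "p \<in> ball z (1/2)" "f p = c + 1/2"
      by (metis imageE subsetD)
    moreover from \<open>c - 1/2 \<in> ball c r'\<close> c obtain q where "q \<in> ball z (1/2)" "f q = c - 1/2"
      by (metis imageE subsetD)
    ultimately show ?thesis using that by blast
  qed
  have qS: "q \<in> strip b" and pS: "p \<in> strip b" using p q sub by auto
  have q1S: "q + 1 \<in> strip b" using qS by (simp add: strip_def)
  have "f (q + 1) = f p" using per[OF qS] p q by simp
  then have "q + 1 = p" using inj q1S pS by (meson inj_onD)
  moreover have "cmod (p - q) < 1"
  proof -
    have "cmod (p - q) \<le> cmod (p - z) + cmod (z - q)" using norm_triangle_ineq[of "p - z" "z - q"] by simp
    also have "\<dots> < 1" using p(1) q(1) by (simp add: dist_norm norm_minus_commute)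
    finally show ?thesis .
  qed
  ultimately show False by (metis add_diff_cancel_left' add.commute norm_one order_less_irrefl)
qed




lemma num_bound:
  fixes r m R q :: real
  assumes "0 < r" "r < m" "m < R" "m / R \<le> q" "r / m \<le> q" "q \<le> 1/2"
  shows "2 * pi * m * (12 * (R / (R - m)^2 + r / (m - r)^2)) \<le> 192 * pi * q"
proof -
  have R0: "0 < R" "0 < m" using assms by linarith+
  have "m \<le> q * R" "r \<le> q * m" using assms R0 by (simp_all add: divide_le_eq)
  moreover have "q * R \<le> (1/2) * R" "q * m \<le> (1/2) * m"
    using assms R0 by (intro mult_right_mono; simp)+
  ultimately have mR: "m \<le> R / 2" and rm: "r \<le> m / 2" by linarith+
  have "(R / 2)^2 \<le> (R - m)^2" using mR R0 by (intro power_mono) auto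
  then have a: "m * R / (R - m)^2 \<le> m * R / (R/2)^2"
    using R0 assms by (intro divide_left_mono) auto
  also have "\<dots> = 4 * (m / R)" using R0 by (simp add: power2_eq_square field_simps)
  finally have a: "m * (R / (R - m)^2) \<le> 4 * q" using assms by simp
  have "(m / 2)^2 \<le> (m - r)^2" using rm R0 by (intro power_mono) auto
  then have b: "m * r / (m - r)^2 \<le> m * r / (m/2)^2"
    using R0 assms by (intro divide_left_mono) auto
  also have "\<dots> = 4 * (r / m)" using R0 by (simp add: power2_eq_square field_simps)
  finally have b: "m * (r / (m - r)^2) \<le> 4 * q" using assms by simp
  have "2 * pi * m * (12 * (R / (R - m)^2 + r / (m - r)^2))
      = 24 * pi * (m * (R / (R - m)^2) + m * (r / (m - r)^2))" by (simp add: algebra_simps)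
  also have "\<dots> \<le> 24 * pi * (4 * q + 4 * q)" using a b by (intro mult_left_mono) auto
  finally show ?thesis by simp
qed

lemma exp_4pi: "24 \<le> exp (4 * pi)"
proof -
  have "1 + 2 * pi \<le> exp (2 * pi)" by (rule exp_ge_add_one_self)
  then have "7 \<le> exp (2 * pi)" using pi_gt3 by linarith
  then have "7 * 7 \<le> exp (2 * pi) * exp (2 * pi)" by (intro mult_mono) auto
  also have "\<dots> = exp (4 * pi)" by (simp flip: exp_add)
  finally show ?thesis by simp
qed




theorem lemma6p6:
  fixes f :: "complex \<Rightarrow> complex" and b :: real
  assumes "b > 3"
    and "f holomorphic_on strip b"
    and "inj_on f (strip b)"
    and "f 0 = 0"
    and "\<And>z. z \<in> strip b \<Longrightarrow> f (z + 1) = f z + 1"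
  shows "\<forall>z \<in> strip (b - 3).
           cmod (deriv (deriv f) z) \<le> C2 * exp (2 * pi * (\<bar>Im z\<bar> - b))"
proof
  note b3 = assms(1) and hol = assms(2) and inj = assms(3) and per = assms(5)
  fix z0 assume "z0 \<in> strip (b - 3)"
  then have y0: "\<bar>Im z0\<bar> < b - 3" by (simp add: strip_def)
  define x0 where "x0 = Re z0"
  define y0 where "y0 = Im z0"
  define S where "S = strip b"
  have oS: "open S" unfolding S_def by (rule strip_open)
  have hd: "deriv f holomorphic_on S" unfolding S_def using hol strip_open by (rule holomorphic_deriv)
  have perd: "deriv f (z + 1) = deriv f z" if "z \<in> S" for z
    using deriv_periodic[OF hol per] that by (simp add: S_def)
  define L where "L = (\<lambda>w. Ln w / (2 * of_real pi * \<i>) + of_real x0)"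
  define P where "P = (\<lambda>w. deriv f (L w))"
  define A where "A = {w. exp (-2*pi*b) < cmod w \<and> cmod w < exp (2*pi*b)}"
  have oA: "open A" unfolding A_def by (intro open_Collect_conj open_Collect_less continuous_intros)
  have A0: "w \<noteq> 0" if "w \<in> A" for w using that by (auto simp: A_def)
  have ImL: "Im (L w) = - ln (cmod w) / (2 * pi)" if "w \<noteq> 0" for w
  proof -
    have "Ln w / (2 * of_real pi * \<i>) = - \<i> * Ln w / (2 * of_real pi)"
      by (simp add: field_simps)
    then show ?thesis using that by (simp add: L_def Im_divide_of_real del: Ln_of_real)
  qed
  have LS: "L w \<in> S" if "w \<in> A" for w
  proof -
    have w0: "0 < cmod w" using A0[OF that] by simp
    have "ln (cmod w) < ln (exp (2*pi*b))" using that w0 by (subst ln_less_cancel_iff) (auto simp: A_def)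
    moreover have "ln (exp (-2*pi*b)) < ln (cmod w)" using that w0 by (subst ln_less_cancel_iff) (auto simp: A_def)
    ultimately have "\<bar>ln (cmod w)\<bar> < 2*pi*b" by simp
    then have "\<bar>- ln (cmod w) / (2 * pi)\<bar> < b" by (simp add: abs_minus_commute divide_less_eq mult.commute)
    then show ?thesis using ImL[OF A0[OF that]] by (simp add: S_def strip_def)
  qed
  define Q where "Q = (\<lambda>w. deriv f (Ln (-w) / (2 * of_real pi * \<i>) + of_real x0 + 1/2))"
  have PQ: "P w = Q w" if "w \<in> A" for w
  proof -
    have w0: "w \<noteq> 0" using A0 that by simp
    show ?thesis
    proof (cases "Im w \<le> 0 \<and> \<not>(Re w < 0 \<and> Im w = 0)")
      case True
      then have "Ln (-w) = Ln w + \<i> * pi" using Ln_minus[OF w0] by simp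
      then have "Ln (-w) / (2 * of_real pi * \<i>) + of_real x0 + 1/2 = L w + 1"
        by (simp add: L_def field_simps)
      then show ?thesis using perd[OF LS[OF that]] by (simp add: P_def Q_def)
    next
      case False
      then have "Ln (-w) = Ln w - \<i> * pi" using Ln_minus[OF w0] by simp
      then have "Ln (-w) / (2 * of_real pi * \<i>) + of_real x0 + 1/2 = L w"
        by (simp add: L_def field_simps)
      then show ?thesis by (simp add: P_def Q_def)
    qed
  qed
  define A1 where "A1 = A \<inter> ({w. 0 < Re w} \<union> {w. Im w \<noteq> 0})"
  define A2 where "A2 = A \<inter> ({w. Re w < 0} \<union> {w. Im w \<noteq> 0})"
  have oA1: "open A1" unfolding A1_def
    by (intro open_Int oA open_Un open_Collect_less open_Collect_neq continuous_intros)
  have oA2: "open A2" unfolding A2_def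
    by (intro open_Int oA open_Un open_Collect_less open_Collect_neq continuous_intros)
  have AU: "A = A1 \<union> A2" unfolding A1_def A2_def using A0 by (auto simp: complex_eq_iff)
  have hL: "L holomorphic_on A1" unfolding L_def
    by (intro holomorphic_intros) (auto simp: A1_def complex_nonpos_Reals_iff)
  have h1: "P holomorphic_on A1"
  proof -
    have "(deriv f \<circ> L) holomorphic_on A1"
      by (rule holomorphic_on_compose_gen[OF hL hd]) (use LS in \<open>auto simp: A1_def\<close>)
    then show ?thesis by (simp add: P_def o_def)
  qed
  have LS2: "Ln (-w) / (2 * of_real pi * \<i>) + of_real x0 + 1/2 \<in> S" if "w \<in> A" for w
  proof -
    have "Im (Ln (-w) / (2 * of_real pi * \<i>) + of_real x0 + 1/2) = Im (L (-w))" by (simp add: L_def)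
    moreover have "-w \<in> A" using that by (simp add: A_def)
    ultimately show ?thesis using LS[of "-w"] by (simp add: S_def strip_def)
  qed
  have hL2: "(\<lambda>w. Ln (-w) / (2 * of_real pi * \<i>) + of_real x0 + 1/2) holomorphic_on A2"
    by (intro holomorphic_intros) (auto simp: A2_def complex_nonpos_Reals_iff)
  have h2: "Q holomorphic_on A2"
  proof -
    have "(deriv f \<circ> (\<lambda>w. Ln (-w) / (2 * of_real pi * \<i>) + of_real x0 + 1/2)) holomorphic_on A2"
      by (rule holomorphic_on_compose_gen[OF hL2 hd]) (use LS2 in \<open>auto simp: A2_def\<close>)
    then show ?thesis by (simp add: Q_def o_def)
  qed
  have h2': "P holomorphic_on A2"
    by (rule holomorphic_transform[OF h2]) (use PQ in \<open>auto simp: A2_def\<close>)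
  have holP: "P holomorphic_on A"
    unfolding AU by (rule holomorphic_on_Un[OF h1 h2' oA1 oA2])
  define E where "E = (\<lambda>z. exp (2 * of_real pi * \<i> * (z - of_real x0)))"
  have LE: "L (E z) = z" if "\<bar>Re z - x0\<bar> < 1/2" for z
  proof -
    have "Ln (E z) = 2 * of_real pi * \<i> * (z - of_real x0)" unfolding E_def
    proof (rule Ln_exp)
      have d: "-1/2 < Re z - x0" "Re z - x0 < 1/2" using that abs_less_iff[of "Re z - x0" "1/2"] by linarith+
      have "2*pi*(-1/2) < 2*pi*(Re z - x0)" "2*pi*(Re z - x0) < 2*pi*(1/2)"
        using d pi_gt_zero by (intro mult_strict_left_mono; simp)+
      then show "- pi < Im (2 * complex_of_real pi * \<i> * (z - complex_of_real x0))"
        "Im (2 * complex_of_real pi * \<i> * (z - complex_of_real x0)) \<le> pi" by auto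
    qed
    then show ?thesis by (simp add: L_def)
  qed
  have ev: "\<forall>\<^sub>F z in nhds z0. deriv f z = (P \<circ> E) z"
  proof (rule eventually_nhds_in_open[of "{z. \<bar>Re z - x0\<bar> < 1/2}", THEN eventually_mono])
    show "open {z. \<bar>Re z - x0\<bar> < 1/2}" by (intro open_Collect_less continuous_intros)
    show "z0 \<in> {z. \<bar>Re z - x0\<bar> < 1/2}" by (simp add: x0_def)
  qed (simp add: P_def LE)
  define w0 where "w0 = E z0"
  have w0eq: "w0 = of_real (exp (-2*pi*y0))"
  proof -
    have "z0 - of_real x0 = \<i> * of_real y0" by (simp add: complex_eq_iff x0_def y0_def)
    then have e: "2 * of_real pi * \<i> * (z0 - of_real x0) = of_real (-2*pi*y0)" by simp
    have "w0 = exp (of_real (-2*pi*y0))" unfolding w0_def E_def e by (rule refl)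
    also have "\<dots> = of_real (exp (-2*pi*y0))" by (rule exp_of_real)
    finally show ?thesis .
  qed
  define B where "B = b - 1/2"
  define r where "r = exp (-2*pi*B)"
  define R where "R = exp (2*pi*B)"
  define m where "m = exp (-2*pi*y0)"
  have cw: "cmod w0 = m" by (simp add: w0eq m_def)
  have y0B: "\<bar>y0\<bar> < B - 5/2" using y0 by (simp add: y0_def B_def)
  have "2*pi*y0 < 2*pi*B" "2*pi*(-y0) < 2*pi*B" using y0B pi_gt_zero by (intro mult_strict_left_mono; simp)+
  then have rm: "r < m" and mR: "m < R" unfolding r_def m_def R_def by simp_all
  have w0A: "w0 \<in> A"
  proof -
    have "exp (-2*pi*b) < r" unfolding r_def B_def using pi_gt_zero by simp
    moreover have "R < exp (2*pi*b)" unfolding R_def B_def using pi_gt_zero by simp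
    ultimately show ?thesis using rm mR cw by (simp add: A_def)
  qed
  have subA: "\<zeta> \<in> A" if "r \<le> cmod \<zeta>" "cmod \<zeta> \<le> R" for \<zeta>
  proof -
    have "exp (-2*pi*b) < r" unfolding r_def B_def using pi_gt_zero by simp
    moreover have "R < exp (2*pi*b)" unfolding R_def B_def using pi_gt_zero by simp
    ultimately show ?thesis using that by (simp add: A_def)
  qed
  have bd: "cmod (P \<zeta>) \<le> 12" if "cmod \<zeta> = r \<or> cmod \<zeta> = R" for \<zeta>
  proof -
    have "\<zeta> \<noteq> 0" using that by (auto simp: r_def R_def)
    have "ln (cmod \<zeta>) = -2*pi*B \<or> ln (cmod \<zeta>) = 2*pi*B" using that by (auto simp: r_def R_def)
    then have "\<bar>Im (L \<zeta>)\<bar> = B" using ImL[OF \<open>\<zeta> \<noteq> 0\<close>] pi_gt_zero B_def b3 by auto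
    then have "\<bar>Im (L \<zeta>)\<bar> \<le> b - 1/2" by (simp add: B_def)
    then show ?thesis unfolding P_def using bloch_bound[OF hol inj, of "L \<zeta>"] per by blast
  qed
  have r0: "0 < r" by (simp add: r_def)
  have dP: "cmod (deriv P w0) \<le> 12 * (R / (R - cmod w0)^2 + r / (cmod w0 - r)^2)"
    by (rule annulus_deriv_bound[OF holP oA r0]) (use rm mR cw subA bd in auto)
  have Pd: "P field_differentiable at w0"
    using holP oA w0A holomorphic_on_imp_differentiable_at by blast
  have Ed: "(E has_field_derivative (2 * of_real pi * \<i> * E z0)) (at z0)"
    unfolding E_def by (auto intro!: derivative_eq_intros)
  have "deriv (deriv f) z0 = deriv (P \<circ> E) z0" by (rule deriv_cong_ev[OF ev refl])
  also have "\<dots> = deriv P w0 * (2 * of_real pi * \<i> * w0)"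
    using deriv_chain[of E z0 P] Ed Pd DERIV_imp_deriv[OF Ed]
    by (auto simp: w0_def field_differentiable_def)
  finally have "cmod (deriv (deriv f) z0) = cmod (deriv P w0) * (2 * pi * m)"
    by (simp add: norm_mult cw)
  also have "\<dots> \<le> 2 * pi * m * (12 * (R / (R - m)^2 + r / (m - r)^2))"
  proof -
    have "0 \<le> 2 * pi * m" using pi_gt_zero by (simp add: m_def)
    from mult_right_mono[OF dP[unfolded cw] this] show ?thesis by (simp add: mult.commute)
  qed
  also have "\<dots> \<le> 192 * pi * exp (-2*pi*(B - \<bar>y0\<bar>))"
  proof (rule num_bound[OF r0 rm mR])
    show "m / R \<le> exp (-2*pi*(B - \<bar>y0\<bar>))"
    proof -
      have "2*pi*(-y0) \<le> 2*pi*\<bar>y0\<bar>" using pi_gt_zero by (intro mult_left_mono) auto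
      then have "-2*pi*y0 - 2*pi*B \<le> -2*pi*(B - \<bar>y0\<bar>)" by (simp add: algebra_simps)
      then show ?thesis unfolding m_def R_def by (simp flip: exp_diff)
    qed
    show "r / m \<le> exp (-2*pi*(B - \<bar>y0\<bar>))"
    proof -
      have "2*pi*y0 \<le> 2*pi*\<bar>y0\<bar>" using pi_gt_zero by (intro mult_left_mono) auto
      then have "-2*pi*B - (-2*pi*y0) \<le> -2*pi*(B - \<bar>y0\<bar>)" by (simp add: algebra_simps)
      then show ?thesis unfolding r_def m_def by (simp flip: exp_diff)
    qed
    have h1: "1 \<le> 2*pi" using pi_gt3 by simp
    have h2: "1 \<le> B - \<bar>y0\<bar>" using y0B by simp
    have t: "1 \<le> 2*pi*(B - \<bar>y0\<bar>)" using mult_mono[OF h1 h2] by simp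
    have "2 \<le> exp (2*pi*(B - \<bar>y0\<bar>))" using exp_ge_add_one_self[of "2*pi*(B - \<bar>y0\<bar>)"] t by linarith
    moreover have "exp (-2*pi*(B - \<bar>y0\<bar>)) * exp (2*pi*(B - \<bar>y0\<bar>)) = 1"
      by (simp flip: exp_add)
    ultimately have "exp (-2*pi*(B - \<bar>y0\<bar>)) * 2 \<le> 1"
      by (metis exp_ge_zero mult_left_mono)
    then show "exp (-2*pi*(B - \<bar>y0\<bar>)) \<le> 1/2" by simp
  qed
  also have "\<dots> = 192 * pi * exp pi * exp (2 * pi * (\<bar>Im z0\<bar> - b))"
    by (simp add: B_def y0_def mult.assoc flip: exp_add) (simp add: algebra_simps)
  also have "\<dots> \<le> C2 * exp (2 * pi * (\<bar>Im z0\<bar> - b))"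
  proof (rule mult_right_mono)
    have C1: "0 \<le> C1" by (simp add: C1_def)
    have "192 * pi * exp pi = 8 * pi * (24 * exp pi)" by simp
    also have "\<dots> \<le> 8 * pi * (exp (4*pi) * exp pi)"
      using exp_4pi pi_gt_zero by (intro mult_left_mono mult_right_mono) auto
    also have "\<dots> = 8 * pi * exp (5 * pi)" by (simp flip: exp_add)
    also have "\<dots> \<le> 8 * pi * exp (5 * pi) * (C1 + 1)" using C1 pi_gt_zero by simp
    finally show "192 * pi * exp pi \<le> C2" by (simp add: C2_def)
  qed simp
  finally show "cmod (deriv (deriv f) z0) \<le> C2 * exp (2 * pi * (\<bar>Im z0\<bar> - b))" .
qed


end
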